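(* Let $(E,\rho)$ be a Polish metric space and $\{P(t)\}_{t\geq 0}$ a Markov semigroup of stochastic kernels on $E$. Let $V:E\to[0,\infty)$ be continuous and assume: (a) $\{P(t)\}$ has a unique invariant probability measure $\mu_*$, and there are $\gamma>0$ and a map $C:\{\nu\in\mathcal{M}_1(E):\int V\,d\nu<\infty\}\to[0,\infty)$ with $d_{\mathrm{FM}}(\nu P(t),\mu_* )\leq C(\nu)e^{-\gamma t}$ for all $t\geq 0$ and all such $\nu$, where $C(\delta_x)=\bar C(x):=\varkappa(V(x)+1)^{1/2}$ for some $\varkappa>0$; (b) there exist $A,B\geq 0$, $\Gamma>0$ with $P(t)V^2(x)\leq Ae^{-\Gamma t}V^2(x)+B$ for all $x\in E$, $t\geq 0$. Then for every $p\in(0,4]$: $\sup_{t\geq 0}\int_E\bar C^p\,d(\nu P(t))<\infty$ whenever $\nu\in\mathcal{M}_1(E)$ satisfies $\int_E V^2\,d\nu<\infty$; and $\int_E\bar C^p\,d\mu_*<\infty$. In particular $\int_E V^2\,d\mu_*<\infty$.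
   Context: $\mathcal{M}_1(E)$: Borel probability measures on $E$. $d_{\mathrm{FM}}(\mu,\nu)=\sup\{|\int f\,d\mu-\int f\,d\nu|: \|f\|_{\mathrm{BL}}\leq 1\}$, where $\|f\|_{\mathrm{BL}}=\max\{\|f\|_\infty,\sup_{x\neq y}|f(x)-f(y)|/\rho(x,y)\}$. $\nu P(t)(\cdot)=\int_E P(t)(x,\cdot)\,\nu(dx)$; invariance means $\mu_*P(t)=\mu_*$ for all $t$. *)

theory Defs
  imports "HOL-Probability.Probability"
begin

definition prob_measures :: "'a::topological_space measure set" where
  "prob_measures = {\<nu>. prob_space \<nu> \<and> sets \<nu> = sets borel}"

definition BL_unit :: "('a::metric_space \<Rightarrow> real) set" where
  "BL_unit = {f. (\<forall>x. \<bar>f x\<bar> \<le> 1) \<and> (\<forall>x y. x \<noteq> y \<longrightarrow> \<bar>f x - f y\<bar> / dist x y \<le> 1)}"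

definition d_FM :: "'a::metric_space measure \<Rightarrow> 'a measure \<Rightarrow> real" where
  "d_FM \<mu> \<nu> = (SUP f\<in>BL_unit. \<bar>(\<integral>x. f x \<partial>\<mu>) - (\<integral>x. f x \<partial>\<nu>)\<bar>)"

text \<open>Markov semigroup of stochastic kernels; P t x is the measure P(t)(x,.).\<close>
definition markov_semigroup :: "(real \<Rightarrow> 'a::topological_space \<Rightarrow> 'a measure) \<Rightarrow> bool" where
  "markov_semigroup P \<longleftrightarrow>
     (\<forall>t\<ge>0. P t \<in> borel \<rightarrow>\<^sub>M prob_algebra borel) \<and>
     (\<forall>x. P 0 x = return borel x) \<and>
     (\<forall>s\<ge>0. \<forall>t\<ge>0. \<forall>x. P (s + t) x = P s x \<bind> P t)"

definition act :: "'a measure \<Rightarrow> (real \<Rightarrow> 'a \<Rightarrow> 'a measure) \<Rightarrow> real \<Rightarrow> 'a measure" where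
  "act \<nu> P t = \<nu> \<bind> P t"

definition invariant :: "(real \<Rightarrow> 'a::topological_space \<Rightarrow> 'a measure) \<Rightarrow> 'a measure \<Rightarrow> bool" where
  "invariant P \<mu> \<longleftrightarrow> \<mu> \<in> prob_measures \<and> (\<forall>t\<ge>0. act \<mu> P t = \<mu>)"

end

theory Submission
  imports Defs
begin

lemma act_nn:
  fixes P :: "real \<Rightarrow> 'a::polish_space \<Rightarrow> 'a measure"
  assumes sg: "markov_semigroup P" and t: "t \<ge> 0" and nu: "sets \<nu> = sets borel"
    and f: "f \<in> borel_measurable borel"
  shows "(\<integral>\<^sup>+x. f x \<partial>(act \<nu> P t)) = (\<integral>\<^sup>+x. \<integral>\<^sup>+y. f y \<partial>P t x \<partial>\<nu>)"
proof -
  have "P t \<in> borel \<rightarrow>\<^sub>M prob_algebra borel" using sg t unfolding markov_semigroup_def by auto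
  then have "P t \<in> \<nu> \<rightarrow>\<^sub>M subprob_algebra borel"
    using measurable_prob_algebraD measurable_cong_sets[OF nu refl] by blast
  then show ?thesis unfolding act_def by (rule nn_integral_bind[OF f])
qed

lemma kernel_prob:
  fixes P :: "real \<Rightarrow> 'a::polish_space \<Rightarrow> 'a measure"
  assumes sg: "markov_semigroup P" and t: "t \<ge> 0"
  shows "prob_space (P t x) \<and> sets (P t x) = sets borel"
proof -
  have "P t \<in> borel \<rightarrow>\<^sub>M prob_algebra borel" using sg t unfolding markov_semigroup_def by auto
  then have "P t x \<in> space (prob_algebra borel)" by (auto dest: measurable_space)
  then show ?thesis by (simp add: space_prob_algebra)
qed

lemma powr_bound:
  fixes v \<kappa> p :: real
  assumes "v \<ge> 0" "\<kappa> > 0" "0 < p" "p \<le> 4"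
  shows "(\<kappa> * sqrt (v + 1)) powr p \<le> 2 * \<kappa> powr p * (v\<^sup>2 + 1)"
proof -
  have s1: "sqrt (v+1) \<ge> 1" using assms by simp
  have "(\<kappa> * sqrt (v + 1)) powr p = \<kappa> powr p * sqrt (v+1) powr p"
    using assms by (simp add: powr_mult)
  also have "sqrt (v+1) powr p \<le> sqrt (v+1) powr 4" using s1 assms by (intro powr_mono) auto
  also have "sqrt (v+1) powr 4 = (v+1)^2"
  proof -
    have "sqrt (v+1) powr 4 = sqrt (v+1) ^ 4" using s1 by (subst powr_numeral) auto
    also have "\<dots> = (sqrt (v+1)^2)^2" by (simp add: power_mult[symmetric])
    finally show ?thesis using assms by simp
  qed
  also have "(v+1)^2 \<le> 2 * (v\<^sup>2 + 1)"
  proof -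
    have "0 \<le> (v-1)^2" by simp
    then show ?thesis by (simp add: power2_eq_square algebra_simps)
  qed
  finally show ?thesis using assms by (simp add: algebra_simps)
qed

lemma part1:
  fixes P :: "real \<Rightarrow> 'a::polish_space \<Rightarrow> 'a measure" and V :: "'a \<Rightarrow> real"
  assumes sg: "markov_semigroup P" and Vm[measurable]: "V \<in> borel_measurable borel"
    and V_nonneg: "\<forall>x. V x \<ge> 0"
    and AB: "A \<ge> 0" "B \<ge> 0" and Gamma_pos: "\<Gamma> > 0"
    and lyap: "\<forall>x. \<forall>t\<ge>0. (\<integral>\<^sup>+y. ennreal ((V y)\<^sup>2) \<partial>(P t x))
                  \<le> ennreal (A * exp (- \<Gamma> * t) * (V x)\<^sup>2 + B)"
    and kp: "\<kappa> > 0" and p: "0 < p" "p \<le> 4"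
    and nu: "\<nu> \<in> prob_measures" and t: "t \<ge> 0"
  shows "(\<integral>\<^sup>+x. ennreal ((\<kappa> * sqrt (V x + 1)) powr p) \<partial>(act \<nu> P t))
     \<le> ennreal (2 * \<kappa> powr p) * (ennreal A * (\<integral>\<^sup>+x. ennreal ((V x)\<^sup>2) \<partial>\<nu>) + ennreal (B + 1))"
proof -
  define K where "K = 2 * \<kappa> powr p"
  have K0: "K \<ge> 0" unfolding K_def by simp
  have nus: "sets \<nu> = sets borel" and nup: "prob_space \<nu>" using nu unfolding prob_measures_def by auto
  have inner: "(\<integral>\<^sup>+y. ennreal ((\<kappa> * sqrt (V y + 1)) powr p) \<partial>P t x)
      \<le> ennreal K * (ennreal A * ennreal ((V x)\<^sup>2) + ennreal (B + 1))" for x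
  proof -
    have kx: "prob_space (P t x)" "sets (P t x) = sets borel" using kernel_prob[OF sg t] by auto
    have mP[measurable]: "V \<in> borel_measurable (P t x)" by (subst measurable_cong_sets[OF kx(2) refl]) (rule Vm)
    have "(\<integral>\<^sup>+y. ennreal ((\<kappa> * sqrt (V y + 1)) powr p) \<partial>P t x)
       \<le> (\<integral>\<^sup>+y. ennreal K * (ennreal ((V y)\<^sup>2) + 1) \<partial>P t x)"
    proof (intro nn_integral_mono)
      fix y
      have le: "(\<kappa> * sqrt (V y + 1)) powr p \<le> K * ((V y)\<^sup>2 + 1)"
        using powr_bound[of "V y" \<kappa> p] V_nonneg kp p unfolding K_def by auto
      have e: "ennreal (K * ((V y)\<^sup>2 + 1)) = ennreal K * (ennreal ((V y)\<^sup>2) + 1)"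
        using K0 by (simp add: ennreal_mult ennreal_plus)
      show "ennreal ((\<kappa> * sqrt (V y + 1)) powr p) \<le> ennreal K * (ennreal ((V y)\<^sup>2) + 1)"
        using le e by (metis ennreal_leI)
    qed
    also have "\<dots> = ennreal K * ((\<integral>\<^sup>+y. ennreal ((V y)\<^sup>2) \<partial>P t x) + 1)"
      using prob_space.emeasure_space_1[OF kx(1)]
      by (simp add: nn_integral_cmult nn_integral_add)
    also have "\<dots> \<le> ennreal K * (ennreal (A * exp (- \<Gamma> * t) * (V x)\<^sup>2 + B) + 1)"
      using lyap t by (intro mult_left_mono add_right_mono) auto
    also have "ennreal (A * exp (- \<Gamma> * t) * (V x)\<^sup>2 + B) + 1 \<le> ennreal A * ennreal ((V x)\<^sup>2) + ennreal (B + 1)"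
    proof -
      have "exp (- \<Gamma> * t) \<le> 1" using Gamma_pos t by simp
      then have "A * exp (- \<Gamma> * t) * (V x)\<^sup>2 \<le> A * (V x)\<^sup>2"
        using AB by (intro mult_right_mono) (auto intro: mult_left_le)
      note h = this
      have "ennreal (A * exp (- \<Gamma> * t) * (V x)\<^sup>2 + B) + 1 \<le> ennreal (A * (V x)\<^sup>2 + (B + 1))"
      proof -
        have nn: "0 \<le> A * exp (- \<Gamma> * t) * (V x)\<^sup>2" using AB by simp
        have "ennreal (A * exp (- \<Gamma> * t) * (V x)\<^sup>2 + B) + 1 = ennreal (A * exp (- \<Gamma> * t) * (V x)\<^sup>2 + B + 1)"
          using nn AB by (subst ennreal_plus) auto
        also have "\<dots> \<le> ennreal (A * (V x)\<^sup>2 + (B + 1))"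
          using h by (intro ennreal_leI) simp
        finally show ?thesis .
      qed
      also have "\<dots> = ennreal A * ennreal ((V x)\<^sup>2) + ennreal (B + 1)"
        using AB by (simp add: ennreal_mult ennreal_plus del: ennreal_1)
      finally show ?thesis .
    qed
    finally show ?thesis by (simp add: mult_left_mono)
  qed
  have mnu[measurable]: "V \<in> borel_measurable \<nu>" by (subst measurable_cong_sets[OF nus refl]) (rule Vm)
  have "(\<integral>\<^sup>+x. ennreal ((\<kappa> * sqrt (V x + 1)) powr p) \<partial>(act \<nu> P t))
     = (\<integral>\<^sup>+x. \<integral>\<^sup>+y. ennreal ((\<kappa> * sqrt (V y + 1)) powr p) \<partial>P t x \<partial>\<nu>)"
    by (rule act_nn[OF sg t nus]) measurable
  also have "\<dots> \<le> (\<integral>\<^sup>+x. ennreal K * (ennreal A * ennreal ((V x)\<^sup>2) + ennreal (B + 1)) \<partial>\<nu>)"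
    by (intro nn_integral_mono inner)
  also have "\<dots> = ennreal K * (ennreal A * (\<integral>\<^sup>+x. ennreal ((V x)\<^sup>2) \<partial>\<nu>) + ennreal (B + 1))"
    using prob_space.emeasure_space_1[OF nup]
    by (simp add: nn_integral_cmult nn_integral_add)
  finally show ?thesis unfolding K_def .
qed

lemma part2:
  fixes P :: "real \<Rightarrow> 'a::polish_space \<Rightarrow> 'a measure" and V :: "'a \<Rightarrow> real"
  assumes sg: "markov_semigroup P" and Vm[measurable]: "V \<in> borel_measurable borel"
    and V_nonneg: "\<forall>x. V x \<ge> 0"
    and inv: "invariant P \<mu>s"
    and AB: "A \<ge> 0" "B \<ge> 0" and Gamma_pos: "\<Gamma> > 0"
    and lyap: "\<forall>x. \<forall>t\<ge>0. (\<integral>\<^sup>+y. ennreal ((V y)\<^sup>2) \<partial>(P t x))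
                  \<le> ennreal (A * exp (- \<Gamma> * t) * (V x)\<^sup>2 + B)"
  shows "(\<integral>\<^sup>+x. ennreal ((V x)\<^sup>2) \<partial>\<mu>s) \<le> ennreal B"
proof -
  have mus: "sets \<mu>s = sets borel" and mup: "prob_space \<mu>s"
    and actmu: "\<And>t. t \<ge> 0 \<Longrightarrow> act \<mu>s P t = \<mu>s"
    using inv unfolding invariant_def prob_measures_def by auto
  have mmu[measurable]: "V \<in> borel_measurable \<mu>s" by (subst measurable_cong_sets[OF mus refl]) (rule Vm)
  define h where "h n y = min (ennreal ((V y)\<^sup>2)) (ennreal (real n))" for n :: nat and y
  have hm[measurable]: "h n \<in> borel_measurable borel" for n unfolding h_def by measurable
  have hmu[measurable]: "h n \<in> borel_measurable \<mu>s" for n by (subst measurable_cong_sets[OF mus refl]) (rule hm)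
  have hn: "(\<integral>\<^sup>+x. h n x \<partial>\<mu>s) \<le> ennreal B" for n
  proof -
    define g where "g k x = min (real n) (A * exp (- \<Gamma> * real k) * (V x)\<^sup>2 + B)" for k :: nat and x
    have gm[measurable]: "g k \<in> borel_measurable \<mu>s" for k unfolding g_def by measurable
    have g0: "0 \<le> g k x" for k x unfolding g_def using AB by simp
    have lim: "(\<lambda>k. integral\<^sup>L \<mu>s (g k)) \<longlonglongrightarrow> integral\<^sup>L \<mu>s (\<lambda>_. min (real n) B)"
     and intg: "\<And>k. integrable \<mu>s (g k)"
    proof -
      have pw: "(\<lambda>k. g k x) \<longlonglongrightarrow> min (real n) B" for x
      proof -
        have "(\<lambda>k. exp (- \<Gamma> * real k)) \<longlonglongrightarrow> 0"
        proof -
          have "(\<lambda>k. exp (- \<Gamma>) ^ k) \<longlonglongrightarrow> 0"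
            by (rule LIMSEQ_power_zero) (use Gamma_pos in simp)
          moreover have "exp (- \<Gamma>) ^ k = exp (- \<Gamma> * real k)" for k
            by (simp add: exp_of_nat_mult[symmetric] mult.commute)
          ultimately show ?thesis by simp
        qed
        then have "(\<lambda>k. A * exp (- \<Gamma> * real k) * (V x)\<^sup>2 + B) \<longlonglongrightarrow> A * 0 * (V x)\<^sup>2 + B"
          by (intro tendsto_intros)
        then have "(\<lambda>k. min (real n) (A * exp (- \<Gamma> * real k) * (V x)\<^sup>2 + B)) \<longlonglongrightarrow> min (real n) (A * 0 * (V x)\<^sup>2 + B)"
          by (rule tendsto_min[OF tendsto_const])
        then show ?thesis unfolding g_def by simp
      qed
      have bnd: "AE x in \<mu>s. norm (g k x) \<le> real n" for k
        using g0 by (simp add: g_def)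
      have iw: "integrable \<mu>s (\<lambda>_. real n)" using mup by (simp add: prob_space.finite_measure finite_measure.integrable_const)
      show "(\<lambda>k. integral\<^sup>L \<mu>s (g k)) \<longlonglongrightarrow> integral\<^sup>L \<mu>s (\<lambda>_. min (real n) B)"
        by (rule integral_dominated_convergence[OF _ gm iw _ bnd]) (auto simp: pw)
      show "integrable \<mu>s (g k)" for k
        by (rule integrable_dominated_convergence2[OF _ gm iw _ bnd]) (auto simp: pw)
    qed
    have le: "(\<integral>\<^sup>+x. h n x \<partial>\<mu>s) \<le> ennreal (integral\<^sup>L \<mu>s (g k))" for k
    proof -
      have "(\<integral>\<^sup>+x. h n x \<partial>\<mu>s) = (\<integral>\<^sup>+x. h n x \<partial>act \<mu>s P (real k))" using actmu by simp
      also have "\<dots> = (\<integral>\<^sup>+x. \<integral>\<^sup>+y. h n y \<partial>P (real k) x \<partial>\<mu>s)"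
        by (rule act_nn[OF sg _ mus hm]) simp
      also have "\<dots> \<le> (\<integral>\<^sup>+x. ennreal (g k x) \<partial>\<mu>s)"
      proof (intro nn_integral_mono)
        fix x
        have kx: "prob_space (P (real k) x)" "sets (P (real k) x) = sets borel" using kernel_prob[OF sg, of "real k"] by auto
        have hk[measurable]: "h n \<in> borel_measurable (P (real k) x)" by (subst measurable_cong_sets[OF kx(2) refl]) (rule hm)
        have a: "(\<integral>\<^sup>+y. h n y \<partial>P (real k) x) \<le> ennreal (real n)"
        proof -
          have "(\<integral>\<^sup>+y. h n y \<partial>P (real k) x) \<le> (\<integral>\<^sup>+y. ennreal (real n) \<partial>P (real k) x)"
            by (intro nn_integral_mono) (simp add: h_def)
          then show ?thesis using prob_space.emeasure_space_1[OF kx(1)] by simp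
        qed
        have b: "(\<integral>\<^sup>+y. h n y \<partial>P (real k) x) \<le> ennreal (A * exp (- \<Gamma> * real k) * (V x)\<^sup>2 + B)"
        proof -
          have "(\<integral>\<^sup>+y. h n y \<partial>P (real k) x) \<le> (\<integral>\<^sup>+y. ennreal ((V y)\<^sup>2) \<partial>P (real k) x)"
            by (intro nn_integral_mono) (simp add: h_def)
          also have "\<dots> \<le> ennreal (A * exp (- \<Gamma> * real k) * (V x)\<^sup>2 + B)" using lyap by simp
          finally show ?thesis .
        qed
        have "ennreal (g k x) = min (ennreal (real n)) (ennreal (A * exp (- \<Gamma> * real k) * (V x)\<^sup>2 + B))"
          unfolding g_def using AB by (subst min_ennreal) auto
        then show "(\<integral>\<^sup>+y. h n y \<partial>P (real k) x) \<le> ennreal (g k x)" using a b by simp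
      qed
      also have "\<dots> = ennreal (integral\<^sup>L \<mu>s (g k))"
        by (rule nn_integral_eq_integral[OF intg]) (simp add: g0)
      finally show ?thesis .
    qed
    have "(\<lambda>k. ennreal (integral\<^sup>L \<mu>s (g k))) \<longlonglongrightarrow> ennreal (integral\<^sup>L \<mu>s (\<lambda>_. min (real n) B))"
      by (intro tendsto_ennrealI lim)
    then have "(\<integral>\<^sup>+x. h n x \<partial>\<mu>s) \<le> ennreal (integral\<^sup>L \<mu>s (\<lambda>_. min (real n) B))"
      by (intro LIMSEQ_le_const[where a="(\<integral>\<^sup>+x. h n x \<partial>\<mu>s)"]) (auto intro: le)
    also have "\<dots> = ennreal (min (real n) B)" using prob_space.prob_space[OF mup] by simp
    also have "\<dots> \<le> ennreal B" by (intro ennreal_leI) simp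
    finally show ?thesis .
  qed
  have sup: "ennreal ((V x)\<^sup>2) = (SUP n. h n x)" for x
  proof (rule antisym)
    obtain n :: nat where "(V x)\<^sup>2 \<le> real n" using real_arch_simple by blast
    then have "h n x = ennreal ((V x)\<^sup>2)" unfolding h_def by (simp add: min_def ennreal_leI)
    then show "ennreal ((V x)\<^sup>2) \<le> (SUP n. h n x)" by (metis UNIV_I SUP_upper)
    show "(SUP n. h n x) \<le> ennreal ((V x)\<^sup>2)" by (intro SUP_least) (simp add: h_def)
  qed
  have inc: "incseq h"
    by (intro incseq_SucI le_funI) (simp add: h_def min.coboundedI2 ennreal_leI min_le_iff_disj)
  have "(\<integral>\<^sup>+x. ennreal ((V x)\<^sup>2) \<partial>\<mu>s) = (\<integral>\<^sup>+x. (SUP n. h n x) \<partial>\<mu>s)" by (simp add: sup)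
  also have "\<dots> = (SUP n. \<integral>\<^sup>+x. h n x \<partial>\<mu>s)" by (rule nn_integral_monotone_convergence_SUP[OF inc hmu])
  also have "\<dots> \<le> ennreal B" by (intro SUP_least hn)
  finally show ?thesis .
qed

theorem corollary3p4:
  fixes P :: "real \<Rightarrow> 'a::polish_space \<Rightarrow> 'a measure"
    and V :: "'a \<Rightarrow> real"
    and \<mu>s :: "'a measure"
    and C :: "'a measure \<Rightarrow> real"
    and \<gamma> \<kappa> A B \<Gamma> :: real
  assumes sg: "markov_semigroup P"
    and V_cont: "continuous_on UNIV V"
    and V_nonneg: "\<forall>x. V x \<ge> 0"
    and inv: "invariant P \<mu>s"
    and uniq: "\<forall>\<mu>. invariant P \<mu> \<longrightarrow> \<mu> = \<mu>s"
    and gamma_pos: "\<gamma> > 0"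
    and C_nonneg: "\<forall>\<nu>\<in>prob_measures. (\<integral>\<^sup>+x. ennreal (V x) \<partial>\<nu>) < \<infinity> \<longrightarrow> C \<nu> \<ge> 0"
    and conv: "\<forall>\<nu>\<in>prob_measures. (\<integral>\<^sup>+x. ennreal (V x) \<partial>\<nu>) < \<infinity> \<longrightarrow>
                 (\<forall>t\<ge>0. d_FM (act \<nu> P t) \<mu>s \<le> C \<nu> * exp (- \<gamma> * t))"
    and kappa_pos: "\<kappa> > 0"
    and C_dirac: "\<forall>x. C (return borel x) = \<kappa> * sqrt (V x + 1)"
    and AB: "A \<ge> 0" "B \<ge> 0" and Gamma_pos: "\<Gamma> > 0"
    and lyap: "\<forall>x. \<forall>t\<ge>0. (\<integral>\<^sup>+y. ennreal ((V y)\<^sup>2) \<partial>(P t x))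
                  \<le> ennreal (A * exp (- \<Gamma> * t) * (V x)\<^sup>2 + B)"
  shows "(\<forall>p::real. 0 < p \<and> p \<le> 4 \<longrightarrow>
            (\<forall>\<nu>\<in>prob_measures. (\<integral>\<^sup>+x. ennreal ((V x)\<^sup>2) \<partial>\<nu>) < \<infinity> \<longrightarrow>
               (SUP t\<in>{0..}. \<integral>\<^sup>+x. ennreal ((\<kappa> * sqrt (V x + 1)) powr p) \<partial>(act \<nu> P t)) < \<infinity>) \<and>
            (\<integral>\<^sup>+x. ennreal ((\<kappa> * sqrt (V x + 1)) powr p) \<partial>\<mu>s) < \<infinity>)
         \<and> (\<integral>\<^sup>+x. ennreal ((V x)\<^sup>2) \<partial>\<mu>s) < \<infinity>"
proof -
  have Vm[measurable]: "V \<in> borel_measurable borel" by (rule borel_measurable_continuous_onI[OF V_cont])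
  have VB: "(\<integral>\<^sup>+x. ennreal ((V x)\<^sup>2) \<partial>\<mu>s) \<le> ennreal B"
    by (rule part2[OF sg Vm V_nonneg inv AB Gamma_pos lyap])
  then have VBf: "(\<integral>\<^sup>+x. ennreal ((V x)\<^sup>2) \<partial>\<mu>s) < \<infinity>" using le_less_trans by fastforce
  have fin: "ennreal (2 * \<kappa> powr p) * (ennreal A * (\<integral>\<^sup>+x. ennreal ((V x)\<^sup>2) \<partial>\<nu>) + ennreal (B + 1)) < \<infinity>"
    if "(\<integral>\<^sup>+x. ennreal ((V x)\<^sup>2) \<partial>\<nu>) < \<infinity>" for p \<nu>
    using that by (simp add: ennreal_mult_less_top)
  have P1: "(SUP t\<in>{0..}. \<integral>\<^sup>+x. ennreal ((\<kappa> * sqrt (V x + 1)) powr p) \<partial>(act \<nu> P t)) < \<infinity>"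
    if p: "0 < p" "p \<le> 4" and nu: "\<nu> \<in> prob_measures" and f: "(\<integral>\<^sup>+x. ennreal ((V x)\<^sup>2) \<partial>\<nu>) < \<infinity>" for p \<nu>
  proof -
    have "(SUP t\<in>{0..}. \<integral>\<^sup>+x. ennreal ((\<kappa> * sqrt (V x + 1)) powr p) \<partial>(act \<nu> P t))
       \<le> ennreal (2 * \<kappa> powr p) * (ennreal A * (\<integral>\<^sup>+x. ennreal ((V x)\<^sup>2) \<partial>\<nu>) + ennreal (B + 1))"
      by (intro SUP_least part1[OF sg Vm V_nonneg AB Gamma_pos lyap kappa_pos p nu]) simp
    then show ?thesis using fin[OF f] le_less_trans by fastforce
  qed
  have mu_pm: "\<mu>s \<in> prob_measures" and act0: "act \<mu>s P 0 = \<mu>s" using inv unfolding invariant_def by auto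
  have P2: "(\<integral>\<^sup>+x. ennreal ((\<kappa> * sqrt (V x + 1)) powr p) \<partial>\<mu>s) < \<infinity>"
    if p: "0 < p" "p \<le> 4" for p
  proof -
    have "(\<integral>\<^sup>+x. ennreal ((\<kappa> * sqrt (V x + 1)) powr p) \<partial>\<mu>s)
       \<le> ennreal (2 * \<kappa> powr p) * (ennreal A * (\<integral>\<^sup>+x. ennreal ((V x)\<^sup>2) \<partial>\<mu>s) + ennreal (B + 1))"
      using part1[OF sg Vm V_nonneg AB Gamma_pos lyap kappa_pos p mu_pm, of 0] act0 by simp
    then show ?thesis using fin[OF VBf] le_less_trans by fastforce
  qed
  show ?thesis using P1 P2 VBf by blast
qed

end
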